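(* Let $\mu$ be the Cauchy distribution $d\mu(x)=\frac1\pi\frac{dx}{1+x^2}$, $\alpha\ge0$, $\beta>0$, $s=\alpha+\beta$. For $u_0\in\mathbb R$ let $u=f_{\alpha,\beta}(u_0)$ and $v=v_s(u_0)$. Then, regarding $u_0$ (and hence $v$) as a function of $u$, \[\frac{d}{du}\int\frac{(u_0-x)\,d\mu(x)}{(u_0-x)^2+v^2}=\frac{v(-s+2v(1+v)^2)}{(1+v)(s^2+4\alpha v^2(1+v))-(\alpha-\beta)sv}.\]
   Context: $v_s(u)=\inf\{v>0:\int\frac{d\mu(x)}{(u-x)^2+v^2}\le\frac1s\}$; $f_{\alpha,\beta}(u_0)=u_0+(\alpha-\beta)\int\frac{(u_0-x)\,d\mu(x)}{(u_0-x)^2+v_s(u_0)^2}$, a strictly increasing homeomorphism of $\mathbb R$. *)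

theory Defs
  imports "HOL-Probability.Probability"
begin

definition cauchy_mu :: "real measure" where
  "cauchy_mu = density lborel (\<lambda>x. ennreal (1 / (pi * (1 + x\<^sup>2))))"

definition v_s :: "real \<Rightarrow> real \<Rightarrow> real" where
  "v_s s u = Inf {v. v > 0 \<and>
      (\<integral>x. 1 / ((u - x)\<^sup>2 + v\<^sup>2) \<partial>cauchy_mu) \<le> 1 / s}"

definition G_s :: "real \<Rightarrow> real \<Rightarrow> real" where
  "G_s s u0 = (\<integral>x. (u0 - x) / ((u0 - x)\<^sup>2 + (v_s s u0)\<^sup>2) \<partial>cauchy_mu)"

definition f_ab :: "real \<Rightarrow> real \<Rightarrow> real \<Rightarrow> real" where
  "f_ab \<alpha> \<beta> u0 = u0 + (\<alpha> - \<beta>) * G_s (\<alpha> + \<beta>) u0"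

end

theory Submission
  imports Defs "HOL-Real_Asymp.Real_Asymp"
begin


lemma integrable_inv_sq: "integrable lborel (\<lambda>x::real. inverse (1 + x^2))"
  using integrable_inverse_1_plus_square by (simp add: set_integrable_def)

lemma integrable_bounded_cauchy:
  fixes g :: "real \<Rightarrow> real"
  assumes c: "\<And>x. isCont g x" and b: "\<And>x. \<bar>g x\<bar> \<le> M * inverse (1 + x^2)"
  shows "integrable lborel g"
proof (rule Bochner_Integration.integrable_bound[of _ "\<lambda>x. M * inverse (1 + x^2)"])
  show "integrable lborel (\<lambda>x. M * inverse (1 + x^2))" using integrable_inv_sq by simp
  show "g \<in> borel_measurable lborel"
  proof -
    have "g \<in> borel_measurable borel"
      by (rule borel_measurable_continuous_onI) (simp add: continuous_at_imp_continuous_on c)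
    then show ?thesis by simp
  qed
  show "AE x in lborel. norm (g x) \<le> norm (M * inverse (1 + x^2))"
    using b by (auto intro!: AE_I2 order_trans[OF _ abs_ge_self])
qed

lemma FTC_R:
  fixes F g :: "real \<Rightarrow> real"
  assumes F: "\<And>x. (F has_real_derivative g x) (at x)" and c: "\<And>x. isCont g x"
    and i: "integrable lborel g"
    and A: "(F \<longlongrightarrow> A) at_bot" and B: "(F \<longlongrightarrow> B) at_top"
  shows "integral\<^sup>L lborel g = B - A"
proof -
  have "(LBINT x=-\<infinity>..\<infinity>. g x) = B - A"
  proof (rule interval_integral_FTC_integrable)
    show "set_integrable lborel (einterval (-\<infinity>) \<infinity>) g" using i by (simp add: set_integrable_def)
    show "((F \<circ> real_of_ereal) \<longlongrightarrow> A) (at_right (-\<infinity>))"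
      using A unfolding ereal_tendsto_simps by simp
    show "((F \<circ> real_of_ereal) \<longlongrightarrow> B) (at_left \<infinity>)"
      using B unfolding ereal_tendsto_simps by simp
  qed (use F c in \<open>auto simp: has_real_derivative_iff_has_vector_derivative[symmetric]\<close>)
  then show ?thesis by (simp add: interval_lebesgue_integral_def set_lebesgue_integral_def)
qed

lemma cauchy_integral:
  fixes g :: "real \<Rightarrow> real"
  assumes [measurable]: "g \<in> borel_measurable borel"
  shows "(\<integral>x. g x \<partial>cauchy_mu) = integral\<^sup>L lborel (\<lambda>x. 1 / (pi * (1 + x\<^sup>2)) * g x)"
  unfolding cauchy_mu_def
  by (subst integral_density) (auto intro!: add_pos_nonneg)



lemma alg_aux:
  fixes P Q :: real
  assumes "P \<noteq> 0" "Q \<noteq> 0" "v \<noteq> 0"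
  shows "(1/pi) * (A/2 * (2 * x / P - 2 * (x - u) / Q) + B * (1 / P) + E / v * (v / Q))
     = (1/pi) * ((A * x + B) / P + (E - A * (x - u)) / Q)"
  using assms by (simp add: field_simps)

lemma gen_FTC:
  fixes g :: "real \<Rightarrow> real"
  assumes v: "v > 0" and i: "integrable lborel g" and c: "\<And>x. isCont g x"
    and g: "\<And>x. g x = (1/pi) * ((A * x + B) / (1 + x\<^sup>2) + (E - A * (x - u)) / ((x - u)\<^sup>2 + v\<^sup>2))"
  shows "integral\<^sup>L lborel g = B + E / v"
proof -
  define F where "F x = (1/pi) * (A/2 * (ln (1 + x\<^sup>2) - ln ((x - u)\<^sup>2 + v\<^sup>2)) + B * arctan x + E / v * arctan ((x - u) / v))" for x
  have "integral\<^sup>L lborel g = (1/pi) * (B * (pi/2) + E / v * (pi/2)) - (1/pi) * (B * (-pi/2) + E / v * (-pi/2))"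
  proof (rule FTC_R[OF _ c i])
    fix x :: real
    have p1: "1 + x\<^sup>2 > 0" using zero_le_power2[of x] by linarith
    have p2: "(x - u)\<^sup>2 + v\<^sup>2 > 0" using v zero_le_power2[of "x-u"] by (smt (verit) zero_less_power)
    have d1: "((\<lambda>x. ln (1 + x\<^sup>2)) has_real_derivative 2 * x / (1 + x\<^sup>2)) (at x)"
      using p1 by (auto intro!: derivative_eq_intros)
    have d2: "((\<lambda>x. ln ((x - u)\<^sup>2 + v\<^sup>2)) has_real_derivative 2 * (x - u) / ((x - u)\<^sup>2 + v\<^sup>2)) (at x)"
      using p2 by (auto intro!: derivative_eq_intros)
    have d3: "((\<lambda>x. arctan ((x - u) / v)) has_real_derivative v / ((x - u)\<^sup>2 + v\<^sup>2)) (at x)"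
    proof -
      have "((\<lambda>x. arctan ((x - u) / v)) has_real_derivative inverse (1 + ((x - u) / v)\<^sup>2) * (1 / v)) (at x)"
        using v by (auto intro!: derivative_eq_intros)
      moreover have "inverse (1 + ((x - u) / v)\<^sup>2) * (1 / v) = v / ((x - u)\<^sup>2 + v\<^sup>2)"
        using v p2 by (simp add: field_simps power2_eq_square)
      ultimately show ?thesis by simp
    qed
    have d4: "(arctan has_real_derivative 1 / (1 + x\<^sup>2)) (at x)"
      using DERIV_arctan[of x] by (simp add: divide_inverse)
    have "(F has_real_derivative (1/pi) * (A/2 * (2 * x / (1 + x\<^sup>2) - 2 * (x - u) / ((x - u)\<^sup>2 + v\<^sup>2))
       + B * (1 / (1 + x\<^sup>2)) + E / v * (v / ((x - u)\<^sup>2 + v\<^sup>2)))) (at x)"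
      unfolding F_def
      by (intro DERIV_cmult DERIV_add DERIV_diff d1 d2 d3 d4)
    moreover have "(1/pi) * (A/2 * (2 * x / (1 + x\<^sup>2) - 2 * (x - u) / ((x - u)\<^sup>2 + v\<^sup>2))
       + B * (1 / (1 + x\<^sup>2)) + E / v * (v / ((x - u)\<^sup>2 + v\<^sup>2))) = g x"
      unfolding g using v p1 p2 by (intro alg_aux) auto
    ultimately show "(F has_real_derivative g x) (at x)" by simp
  next
    show "(F \<longlongrightarrow> (1/pi) * (B * (pi/2) + E / v * (pi/2))) at_top"
      unfolding F_def using v by real_asymp
    show "(F \<longlongrightarrow> (1/pi) * (B * (-pi/2) + E / v * (-pi/2))) at_bot"
      unfolding F_def using v by real_asymp
  qed
  also have "\<dots> = B + E / v" by (simp add: field_simps)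
  finally show ?thesis .
qed



lemma pf_aux:
  fixes P Q D a b :: real
  assumes "P \<noteq> 0" "Q \<noteq> 0" "D \<noteq> 0" "a * Q + b * P = D" "g = c / (pi * P) * (1 / Q)"
  shows "g = (1/pi) * ((c * a / D) / P + (c * b / D) / Q)"
proof -
  have "(1/pi) * ((c * a / D) / P + (c * b / D) / Q) = c * (a * Q + b * P) / (pi * D * P * Q)"
    using assms(1-3) by (simp add: field_simps)
  also have "\<dots> = c / (pi * P) * (1 / Q)" using assms by (simp add: field_simps)
  finally show ?thesis using assms(5) by simp
qed

lemma sq_pos1: "(1::real) + x\<^sup>2 > 0" using zero_le_power2[of x] by linarith
lemma sq_pos2: "(v::real) > 0 \<Longrightarrow> t\<^sup>2 + v\<^sup>2 > 0" by (smt (verit) zero_le_power2 zero_less_power)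

lemma aux2: "(P::real) > 0 \<Longrightarrow> x\<^sup>2 = P - 1 \<Longrightarrow> ((1 * P - x * (2 * x)) / (P * P) + 1 / P) / (2 * pi) = 1 / (pi * P) * (1 / P)"
proof -
  assume P: "P > 0" and x: "x\<^sup>2 = P - 1"
  have e: "1 * P - x * (2 * x) = 2 - P" using x by (simp add: power2_eq_square)
  show ?thesis using P by (subst e) (simp add: field_simps)
qed

lemma aux3: "(X::real) \<noteq> 0 \<Longrightarrow> Y \<noteq> 0 \<Longrightarrow> (a * X) / (v * (Y * X)) = a / (v * Y)"
  by simp

lemma I_int:
  fixes u v :: real
  assumes v: "v > 0"
  shows "(\<integral>x. 1 / ((u - x)\<^sup>2 + v\<^sup>2) \<partial>cauchy_mu) = (1 + v) / (v * (u\<^sup>2 + (1 + v)\<^sup>2))"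
proof -
  define g where "g x = 1 / (pi * (1 + x\<^sup>2)) * (1 / ((u - x)\<^sup>2 + v\<^sup>2))" for x
  have cont: "isCont g x" for x
    unfolding g_def using sq_pos1[of x] sq_pos2[OF v, of "u-x"]
    by (intro continuous_intros) auto
  have int: "integrable lborel g"
  proof (rule integrable_bounded_cauchy[OF cont])
    fix x :: real
    have "0 \<le> g x" unfolding g_def using sq_pos1[of x] sq_pos2[OF v, of "u-x"] by simp
    moreover have "g x \<le> 1 / (pi * v\<^sup>2) * inverse (1 + x\<^sup>2)"
    proof -
      have "1 / ((u - x)\<^sup>2 + v\<^sup>2) \<le> 1 / v\<^sup>2"
        using v sq_pos2[OF v, of "u-x"] by (intro divide_left_mono) (auto intro!: mult_pos_pos)
      then have "g x \<le> 1 / (pi * (1 + x\<^sup>2)) * (1 / v\<^sup>2)"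
        unfolding g_def using sq_pos1[of x] by (intro mult_left_mono) auto
      also have "\<dots> = 1 / (pi * v\<^sup>2) * inverse (1 + x\<^sup>2)" by (simp add: field_simps)
      finally show ?thesis .
    qed
    ultimately show "\<bar>g x\<bar> \<le> 1 / (pi * v\<^sup>2) * inverse (1 + x\<^sup>2)" by simp
  qed
  have meas: "(\<lambda>x. 1 / ((u - x)\<^sup>2 + v\<^sup>2)) \<in> borel_measurable borel" by measurable
  have "(\<integral>x. 1 / ((u - x)\<^sup>2 + v\<^sup>2) \<partial>cauchy_mu) = integral\<^sup>L lborel g"
    unfolding g_def by (rule cauchy_integral[OF meas])
  also have "\<dots> = (1 + v) / (v * (u\<^sup>2 + (1 + v)\<^sup>2))"
  proof (cases "u = 0 \<and> v = 1")
    case True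
    define F where "F x = (x / (1 + x\<^sup>2) + arctan x) / (2 * pi)" for x
    have "integral\<^sup>L lborel g = (1/4) - (-1/4)"
    proof (rule FTC_R[OF _ cont int])
      fix x :: real
      have b: "((\<lambda>x. 1 + x\<^sup>2) has_real_derivative 2 * x) (at x)"
        by (auto intro!: derivative_eq_intros)
      have a: "((\<lambda>x. x / (1 + x\<^sup>2)) has_real_derivative (1 * (1 + x\<^sup>2) - x * (2 * x)) / ((1 + x\<^sup>2) * (1 + x\<^sup>2))) (at x)"
        using DERIV_divide[OF DERIV_ident b] sq_pos1[of x] by simp
      have d4: "(arctan has_real_derivative 1 / (1 + x\<^sup>2)) (at x)"
        using DERIV_arctan[of x] by (simp add: divide_inverse)
      have "(F has_real_derivative ((1 * (1 + x\<^sup>2) - x * (2 * x)) / ((1 + x\<^sup>2) * (1 + x\<^sup>2)) + 1 / (1 + x\<^sup>2)) / (2 * pi)) (at x)"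
        unfolding F_def by (intro DERIV_cdivide DERIV_add a d4)
      moreover have "((1 * (1 + x\<^sup>2) - x * (2 * x)) / ((1 + x\<^sup>2) * (1 + x\<^sup>2)) + 1 / (1 + x\<^sup>2)) / (2 * pi) = g x"
        unfolding g_def using True sq_pos1[of x] aux2[of "1 + x\<^sup>2" x] by simp
      ultimately show "(F has_real_derivative g x) (at x)" by simp
    next
      show "(F \<longlongrightarrow> 1/4) at_top" unfolding F_def by real_asymp
      show "(F \<longlongrightarrow> -1/4) at_bot" unfolding F_def by real_asymp
    qed
    then show ?thesis using True by simp
  next
    case False
    define c where "c = 1 - u\<^sup>2 - v\<^sup>2"
    define D where "D = 4 * u\<^sup>2 + c\<^sup>2"
    have fac: "D = (u\<^sup>2 + (1 + v)\<^sup>2) * (u\<^sup>2 + (1 - v)\<^sup>2)"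
      unfolding D_def c_def by (simp add: algebra_simps power2_eq_square)
    have D0: "D \<noteq> 0"
    proof
      assume "D = 0"
      moreover have "u\<^sup>2 \<ge> 0" "c\<^sup>2 \<ge> 0" by simp_all
      ultimately have "u\<^sup>2 = 0 \<and> c\<^sup>2 = 0" unfolding D_def by linarith
      then have "u = 0 \<and> c = 0" by simp
      then have "v\<^sup>2 = 1" unfolding c_def by auto
      then have "v = 1" using v by (simp add: power2_eq_1_iff)
      then show False using False \<open>u = 0 \<and> c = 0\<close> by simp
    qed
    have "integral\<^sup>L lborel g = - c / D + ((2 * u\<^sup>2 + c) / D) / v"
    proof (rule gen_FTC[OF v int cont])
      fix x :: real
      have id: "(2 * u * x - c) * ((x - u)\<^sup>2 + v\<^sup>2) + (2 * u\<^sup>2 + c - 2 * u * (x - u)) * (1 + x\<^sup>2) = D"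
        unfolding D_def c_def by (simp add: algebra_simps power2_eq_square)
      have "g x = (1/pi) * ((1 * (2 * u * x - c) / D) / (1 + x\<^sup>2) + (1 * (2 * u\<^sup>2 + c - 2 * u * (x - u)) / D) / ((x - u)\<^sup>2 + v\<^sup>2))"
        by (rule pf_aux[OF _ _ D0 id]) (use v sq_pos1[of x] sq_pos2[OF v, of "x-u"] in \<open>simp_all add: g_def power2_commute[of u x]\<close>)
      also have "\<dots> = (1/pi) * ((2 * u / D * x + - c / D) / (1 + x\<^sup>2) + ((2 * u\<^sup>2 + c) / D - 2 * u / D * (x - u)) / ((x - u)\<^sup>2 + v\<^sup>2))"
      proof -
        have "1 * (2 * u * x - c) / D = 2 * u / D * x + - c / D" using D0 by (simp add: field_simps)
        moreover have "1 * (2 * u\<^sup>2 + c - 2 * u * (x - u)) / D = (2 * u\<^sup>2 + c) / D - 2 * u / D * (x - u)"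
          using D0 by (simp add: field_simps)
        ultimately show ?thesis by simp
      qed
      finally show "g x = (1/pi) * ((2 * u / D * x + - c / D) / (1 + x\<^sup>2) + ((2 * u\<^sup>2 + c) / D - 2 * u / D * (x - u)) / ((x - u)\<^sup>2 + v\<^sup>2))" .
    qed
    also have "\<dots> = (c * (1 - v) + 2 * u\<^sup>2) / (v * D)" using v D0 by (simp add: field_simps)
    also have "c * (1 - v) + 2 * u\<^sup>2 = (1 + v) * (u\<^sup>2 + (1 - v)\<^sup>2)"
      unfolding c_def by (simp add: algebra_simps power2_eq_square)
    also have "(1 + v) * (u\<^sup>2 + (1 - v)\<^sup>2) / (v * D) = (1 + v) / (v * (u\<^sup>2 + (1 + v)\<^sup>2))"
      unfolding fac by (rule aux3) (use D0 fac in auto)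
    finally show ?thesis .
  qed
  finally show ?thesis .
qed



lemma abs_frac_le:
  fixes t v :: real assumes v: "v > 0"
  shows "\<bar>t\<bar> / (t\<^sup>2 + v\<^sup>2) \<le> 1 / v"
proof -
  have "0 \<le> (\<bar>t\<bar> - v)\<^sup>2" by simp
  then have "2 * \<bar>t\<bar> * v \<le> t\<^sup>2 + v\<^sup>2" by (simp add: power2_eq_square algebra_simps)
  moreover have "0 \<le> \<bar>t\<bar> * v" using v by simp
  ultimately have "\<bar>t\<bar> * v \<le> t\<^sup>2 + v\<^sup>2" by linarith
  then show ?thesis using v sq_pos2[OF v, of t] by (simp add: field_simps)
qed

lemma pf_aux2:
  fixes P Q D a b :: real
  assumes "P \<noteq> 0" "Q \<noteq> 0" "D \<noteq> 0" "a * Q + b * P = D * c" "g = 1 / (pi * P) * (c / Q)"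
  shows "g = (1/pi) * ((a / D) / P + (b / D) / Q)"
proof -
  have "(1/pi) * ((a / D) / P + (b / D) / Q) = (a * Q + b * P) / (pi * D * P * Q)"
    using assms(1-3) by (simp add: field_simps)
  also have "\<dots> = 1 / (pi * P) * (c / Q)" using assms by (simp add: field_simps)
  finally show ?thesis using assms(5) by simp
qed

lemma aux4: "(P::real) > 0 \<Longrightarrow> - (2 * x * inverse (P ^ 2)) / (2 * pi) = 1 / (pi * P) * (- x / P)"
  by (simp add: field_simps power2_eq_square)

lemma aux5: "(X::real) \<noteq> 0 \<Longrightarrow> Y \<noteq> 0 \<Longrightarrow> (a * X) / (Y * X) = a / Y"
  by simp

lemma J_int:
  fixes u v :: real
  assumes v: "v > 0"
  shows "(\<integral>x. (u - x) / ((u - x)\<^sup>2 + v\<^sup>2) \<partial>cauchy_mu) = u / (u\<^sup>2 + (1 + v)\<^sup>2)"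
proof -
  define g where "g x = 1 / (pi * (1 + x\<^sup>2)) * ((u - x) / ((u - x)\<^sup>2 + v\<^sup>2))" for x
  have cont: "isCont g x" for x
    unfolding g_def using sq_pos1[of x] sq_pos2[OF v, of "u-x"]
    by (intro continuous_intros) auto
  have int: "integrable lborel g"
  proof (rule integrable_bounded_cauchy[OF cont])
    fix x :: real
    have "\<bar>g x\<bar> = 1 / (pi * (1 + x\<^sup>2)) * (\<bar>u - x\<bar> / ((u - x)\<^sup>2 + v\<^sup>2))"
      unfolding g_def using sq_pos1[of x] sq_pos2[OF v, of "u-x"] by (simp add: abs_mult)
    also have "\<dots> \<le> 1 / (pi * (1 + x\<^sup>2)) * (1 / v)"
      using sq_pos1[of x] abs_frac_le[OF v, of "u - x"] by (intro mult_left_mono) auto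
    also have "\<dots> = 1 / (pi * v) * inverse (1 + x\<^sup>2)" by (simp add: field_simps)
    finally show "\<bar>g x\<bar> \<le> 1 / (pi * v) * inverse (1 + x\<^sup>2)" .
  qed
  have meas: "(\<lambda>x. (u - x) / ((u - x)\<^sup>2 + v\<^sup>2)) \<in> borel_measurable borel" by measurable
  have "(\<integral>x. (u - x) / ((u - x)\<^sup>2 + v\<^sup>2) \<partial>cauchy_mu) = integral\<^sup>L lborel g"
    unfolding g_def by (rule cauchy_integral[OF meas])
  also have "\<dots> = u / (u\<^sup>2 + (1 + v)\<^sup>2)"
  proof (cases "u = 0 \<and> v = 1")
    case True
    define F where "F x = inverse (1 + x\<^sup>2) / (2 * pi)" for x
    have "integral\<^sup>L lborel g = 0 - 0"
    proof (rule FTC_R[OF _ cont int])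
      fix x :: real
      have b: "((\<lambda>x. 1 + x\<^sup>2) has_real_derivative 2 * x) (at x)"
        by (auto intro!: derivative_eq_intros)
      have "(F has_real_derivative - (2 * x * inverse ((1 + x\<^sup>2) ^ 2)) / (2 * pi)) (at x)"
      proof -
        have "((\<lambda>x. inverse (1 + x\<^sup>2)) has_real_derivative - (2 * x * inverse ((1 + x\<^sup>2) ^ 2))) (at x)"
          using DERIV_inverse_fun[OF b] sq_pos1[of x] by (simp add: power2_eq_square)
        then show ?thesis unfolding F_def by (rule DERIV_cdivide)
      qed
      moreover have "- (2 * x * inverse ((1 + x\<^sup>2) ^ 2)) / (2 * pi) = g x"
        unfolding g_def using True sq_pos1[of x] aux4[of "1 + x\<^sup>2" x] by simp
      ultimately show "(F has_real_derivative g x) (at x)" by simp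
    next
      show "(F \<longlongrightarrow> 0) at_top" unfolding F_def by real_asymp
      show "(F \<longlongrightarrow> 0) at_bot" unfolding F_def by real_asymp
    qed
    then show ?thesis using True by simp
  next
    case False
    define c where "c = 1 - u\<^sup>2 - v\<^sup>2"
    define D where "D = 4 * u\<^sup>2 + c\<^sup>2"
    have fac: "D = (u\<^sup>2 + (1 + v)\<^sup>2) * (u\<^sup>2 + (1 - v)\<^sup>2)"
      unfolding D_def c_def by (simp add: algebra_simps power2_eq_square)
    have D0: "D \<noteq> 0"
    proof
      assume "D = 0"
      moreover have "u\<^sup>2 \<ge> 0" "c\<^sup>2 \<ge> 0" by simp_all
      ultimately have "u\<^sup>2 = 0 \<and> c\<^sup>2 = 0" unfolding D_def by linarith
      then have "u = 0 \<and> c = 0" by simp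
      then have "v\<^sup>2 = 1" unfolding c_def by auto
      then have "v = 1" using v by (simp add: power2_eq_1_iff)
      then show False using False \<open>u = 0 \<and> c = 0\<close> by simp
    qed
    have "integral\<^sup>L lborel g = u * (2 - c) / D + (- 2 * u * v\<^sup>2 / D) / v"
    proof (rule gen_FTC[OF v int cont])
      fix x :: real
      have id: "((2 * u\<^sup>2 + c) * x + u * (2 - c)) * ((x - u)\<^sup>2 + v\<^sup>2) + (- 2 * u * v\<^sup>2 - (2 * u\<^sup>2 + c) * (x - u)) * (1 + x\<^sup>2) = D * (u - x)"
        unfolding D_def c_def by (simp add: algebra_simps power2_eq_square)
      have "g x = (1/pi) * (((2 * u\<^sup>2 + c) * x + u * (2 - c)) / D / (1 + x\<^sup>2) + ((- 2 * u * v\<^sup>2 - (2 * u\<^sup>2 + c) * (x - u)) / D) / ((x - u)\<^sup>2 + v\<^sup>2))"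
        by (rule pf_aux2[OF _ _ D0 id]) (use v sq_pos1[of x] sq_pos2[OF v, of "x-u"] in \<open>simp_all add: g_def power2_commute[of u x]\<close>)
      also have "\<dots> = (1/pi) * (((2 * u\<^sup>2 + c) / D * x + u * (2 - c) / D) / (1 + x\<^sup>2) + (- 2 * u * v\<^sup>2 / D - (2 * u\<^sup>2 + c) / D * (x - u)) / ((x - u)\<^sup>2 + v\<^sup>2))"
      proof -
        have "((2 * u\<^sup>2 + c) * x + u * (2 - c)) / D = (2 * u\<^sup>2 + c) / D * x + u * (2 - c) / D" using D0 by (simp add: field_simps)
        moreover have "(- 2 * u * v\<^sup>2 - (2 * u\<^sup>2 + c) * (x - u)) / D = - 2 * u * v\<^sup>2 / D - (2 * u\<^sup>2 + c) / D * (x - u)"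
          using D0 by (simp add: field_simps)
        ultimately show ?thesis by simp
      qed
      finally show "g x = (1/pi) * (((2 * u\<^sup>2 + c) / D * x + u * (2 - c) / D) / (1 + x\<^sup>2) + (- 2 * u * v\<^sup>2 / D - (2 * u\<^sup>2 + c) / D * (x - u)) / ((x - u)\<^sup>2 + v\<^sup>2))" .
    qed
    also have "\<dots> = u * (2 - c - 2 * v) / D" using v D0 by (simp add: field_simps power2_eq_square)
    also have "2 - c - 2 * v = u\<^sup>2 + (1 - v)\<^sup>2"
      unfolding c_def by (simp add: algebra_simps power2_eq_square)
    also have "u * (u\<^sup>2 + (1 - v)\<^sup>2) / D = u / (u\<^sup>2 + (1 + v)\<^sup>2)"
      unfolding fac by (rule aux5) (use D0 fac in auto)
    finally show ?thesis .
  qed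
  finally show ?thesis .
qed



definition hh :: "real \<Rightarrow> real \<Rightarrow> real" where
  "hh s v = s * (1 + v) / v - (1 + v)\<^sup>2"

lemma hh_mono:
  assumes s: "s > 0" and a: "0 < a" and ab: "a < b"
  shows "hh s b < hh s a"
proof -
  have "s / b < s / a" using s a ab by (intro divide_strict_left_mono) auto
  moreover have "s * (1 + b) / b = s + s / b" "s * (1 + a) / a = s + s / a"
    using a ab by (simp_all add: field_simps)
  moreover have "(1 + a)\<^sup>2 < (1 + b)\<^sup>2" using a ab by (intro power_strict_mono) auto
  ultimately show ?thesis unfolding hh_def by linarith
qed

lemma hh_deriv: "v > 0 \<Longrightarrow> (hh s has_real_derivative (- s / v\<^sup>2 - 2 * (1 + v))) (at v)"
proof -
  assume v: "v > 0"
  have der: "((\<lambda>v. s + s / v - (1 + v)\<^sup>2) has_real_derivative (- s / v\<^sup>2 - 2 * (1 + v))) (at v)"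
    using v by (auto intro!: derivative_eq_intros simp: field_simps power2_eq_square)
  have ev: "eventually (\<lambda>w. s + s / w - (1 + w)\<^sup>2 = hh s w) (nhds v)"
  proof -
    have "eventually (\<lambda>w. w \<in> {0<..}) (nhds v)" by (rule eventually_nhds_in_open) (use v in auto)
    then show ?thesis by eventually_elim (simp add: hh_def field_simps)
  qed
  show ?thesis using DERIV_cong_ev[OF refl ev refl] der by blast
qed

lemma hh_cont: "v > 0 \<Longrightarrow> isCont (hh s) v"
  using hh_deriv DERIV_isCont by blast

lemma hh_root:
  assumes s: "s > 0"
  shows "\<exists>r>0. hh s r = y"
proof -
  define v1 where "v1 = min 1 (s / (\<bar>y\<bar> + 4))"
  define v2 where "v2 = 1 + 2 * s + \<bar>y\<bar>"
  have v1p: "v1 > 0" unfolding v1_def using s by auto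
  have v1le: "v1 \<le> 1" unfolding v1_def by auto
  have v12: "v1 \<le> v2" using v1le s unfolding v2_def by auto
  have "y \<le> hh s v1"
  proof -
    have "v1 \<le> s / (\<bar>y\<bar> + 4)" unfolding v1_def by auto
    then have "v1 * (\<bar>y\<bar> + 4) \<le> s" by (simp add: field_simps)
    then have "\<bar>y\<bar> + 4 \<le> s / v1" using v1p by (simp add: field_simps)
    moreover have "s / v1 \<le> s * (1 + v1) / v1" using s v1p by (simp add: field_simps)
    moreover have "(1 + v1)\<^sup>2 \<le> 2\<^sup>2" using v1p v1le by (intro power_mono) auto
    ultimately show ?thesis unfolding hh_def by simp
  qed
  moreover have "hh s v2 \<le> y"
  proof -
    have v2g: "v2 \<ge> 1" unfolding v2_def using s by simp
    have "s * (1 + v2) / v2 = s + s / v2" using v2g by (simp add: field_simps)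
    moreover have "s / v2 \<le> s" using s v2g by (simp add: field_simps)
    moreover have "v2 \<le> (1 + v2)\<^sup>2" using v2g by (simp add: power2_eq_square algebra_simps)
    ultimately show ?thesis unfolding hh_def v2_def by simp
  qed
  moreover have "\<forall>x. v1 \<le> x \<and> x \<le> v2 \<longrightarrow> isCont (hh s) x"
    using v1p by (auto intro!: hh_cont)
  ultimately obtain r where "v1 \<le> r" "r \<le> v2" "hh s r = y"
    using IVT2[of "hh s" v2 y v1] v12 by blast
  then show ?thesis using v1p by (intro exI[of _ r]) auto
qed

lemma hh_inj: "s > 0 \<Longrightarrow> 0 < a \<Longrightarrow> 0 < b \<Longrightarrow> hh s a = hh s b \<Longrightarrow> a = b"
  by (metis hh_mono less_irrefl linorder_neqE_linordered_idom)

definition KK :: "real \<Rightarrow> real \<Rightarrow> real" where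
  "KK s y = (THE r. 0 < r \<and> hh s r = y)"

lemma KK_prop: assumes "s > 0" shows "0 < KK s y \<and> hh s (KK s y) = y"
proof -
  have "\<exists>!r. 0 < r \<and> hh s r = y" using hh_root[OF assms] hh_inj[OF assms] by blast
  then show ?thesis unfolding KK_def by (rule theI')
qed

lemma KK_unique: "s > 0 \<Longrightarrow> 0 < r \<Longrightarrow> KK s (hh s r) = r"
  using KK_prop hh_inj by blast

lemma KK_deriv:
  assumes s: "s > 0"
  shows "(KK s has_real_derivative inverse (- s / (KK s y)\<^sup>2 - 2 * (1 + KK s y))) (at y)"
proof (rule DERIV_inverse_function[where a = "y - 1" and b = "y + 1"])
  have p: "KK s y > 0" using KK_prop[OF s] by blast
  show "(hh s has_real_derivative (- s / (KK s y)\<^sup>2 - 2 * (1 + KK s y))) (at (KK s y))"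
    using hh_deriv[OF p] .
  show "- s / (KK s y)\<^sup>2 - 2 * (1 + KK s y) \<noteq> 0"
  proof -
    have "s / (KK s y)\<^sup>2 > 0" using s p by simp
    moreover have "- s / (KK s y)\<^sup>2 = - (s / (KK s y)\<^sup>2)" by simp
    ultimately show ?thesis using p by (smt (verit))
  qed
  show "\<And>z. y - 1 < z \<Longrightarrow> z < y + 1 \<Longrightarrow> hh s (KK s z) = z" using KK_prop[OF s] by blast
  have "isCont (KK s) (hh s (KK s y))"
  proof (rule isCont_inverse_function2[where a = "KK s y / 2" and b = "2 * KK s y" and f = "hh s" and g = "KK s" and x = "KK s y"])
    show "KK s y / 2 < KK s y" "KK s y < 2 * KK s y" using p by auto
    show "\<And>z. KK s y / 2 \<le> z \<Longrightarrow> z \<le> 2 * KK s y \<Longrightarrow> KK s (hh s z) = z"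
      using p by (intro KK_unique[OF s]) auto
    show "\<And>z. KK s y / 2 \<le> z \<Longrightarrow> z \<le> 2 * KK s y \<Longrightarrow> isCont (hh s) z"
      using p by (intro hh_cont) auto
  qed
  then show "isCont (KK s) y" using KK_prop[OF s] by simp
qed auto

lemma vs_eq:
  assumes s: "s > 0"
  shows "v_s s u = KK s (u\<^sup>2)"
proof -
  define r where "r = KK s (u\<^sup>2)"
  have r: "r > 0" "hh s r = u\<^sup>2" using KK_prop[OF s] unfolding r_def by auto
  have "{v. v > 0 \<and> (\<integral>x. 1 / ((u - x)\<^sup>2 + v\<^sup>2) \<partial>cauchy_mu) \<le> 1 / s} = {r..}"
  proof (intro set_eqI iffI)
    fix v assume "v \<in> {v. v > 0 \<and> (\<integral>x. 1 / ((u - x)\<^sup>2 + v\<^sup>2) \<partial>cauchy_mu) \<le> 1 / s}"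
    then have v: "v > 0" and le: "(1 + v) / (v * (u\<^sup>2 + (1 + v)\<^sup>2)) \<le> 1 / s"
      using I_int by auto
    have pos: "v * (u\<^sup>2 + (1 + v)\<^sup>2) > 0" using v by (intro mult_pos_pos) (auto intro: add_nonneg_pos)
    from le have "s * (1 + v) \<le> v * (u\<^sup>2 + (1 + v)\<^sup>2)" using pos s by (simp add: field_simps)
    then have "hh s v \<le> u\<^sup>2" using v unfolding hh_def by (simp add: field_simps)
    then have "\<not> v < r" using hh_mono[OF s v, of r] r by auto
    then show "v \<in> {r..}" by simp
  next
    fix v assume "v \<in> {r..}"
    then have vr: "r \<le> v" by simp
    then have v: "v > 0" using r by simp
    have "hh s v \<le> u\<^sup>2" using hh_mono[OF s r(1), of v] vr r by (cases "r = v") auto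
    then have "s * (1 + v) \<le> v * (u\<^sup>2 + (1 + v)\<^sup>2)" using v unfolding hh_def by (simp add: field_simps)
    moreover have pos: "v * (u\<^sup>2 + (1 + v)\<^sup>2) > 0" using v by (intro mult_pos_pos) (auto intro: add_nonneg_pos)
    ultimately have "(1 + v) / (v * (u\<^sup>2 + (1 + v)\<^sup>2)) \<le> 1 / s" using s by (simp add: field_simps)
    then show "v \<in> {v. v > 0 \<and> (\<integral>x. 1 / ((u - x)\<^sup>2 + v\<^sup>2) \<partial>cauchy_mu) \<le> 1 / s}"
      using v I_int[OF v, of u] by simp
  qed
  then show ?thesis unfolding v_s_def r_def by simp
qed

lemma Gs_eq: "s > 0 \<Longrightarrow> G_s s u = u / (u\<^sup>2 + (1 + KK s (u\<^sup>2))\<^sup>2)"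
  unfolding G_s_def vs_eq using J_int KK_prop by auto



lemma alg_G:
  fixes V u s :: real
  assumes V: "V > 0" and s: "s > 0" and hq: "u\<^sup>2 = s * (1 + V) / V - (1 + V)\<^sup>2"
  shows "(1 * (u\<^sup>2 + (1 + V)\<^sup>2) - u * (2 * u + 2 * (1 + V) * (inverse (- s / V\<^sup>2 - 2 * (1 + V)) * (2 * u))))
          / ((u\<^sup>2 + (1 + V)\<^sup>2) * (u\<^sup>2 + (1 + V)\<^sup>2))
       = V * (2 * V * (1 + V)\<^sup>2 - s) / (s * (1 + V) * (s + 2 * V\<^sup>2 * (1 + V)))"
proof -
  define w where "w = 1 + V"
  have w: "w > 0" using V unfolding w_def by simp
  define Dd where "Dd = s + 2 * V\<^sup>2 * w"
  have Dd: "Dd > 0" unfolding Dd_def using s w V by (simp add: add_pos_nonneg)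
  have H: "- s / V\<^sup>2 - 2 * w = - Dd / V\<^sup>2" unfolding Dd_def using V by (simp add: field_simps)
  have den: "u\<^sup>2 + w\<^sup>2 = s * w / V" using hq unfolding w_def by simp
  have num: "u * (2 * u + 2 * w * (inverse (- Dd / V\<^sup>2) * (2 * u))) = 2 * u\<^sup>2 * s / Dd"
    using V Dd unfolding Dd_def by (simp add: field_simps power2_eq_square)
  have "(1 * (u\<^sup>2 + w\<^sup>2) - u * (2 * u + 2 * w * (inverse (- s / V\<^sup>2 - 2 * w) * (2 * u))))
          / ((u\<^sup>2 + w\<^sup>2) * (u\<^sup>2 + w\<^sup>2))
     = (s * w / V - 2 * (s * w / V - w\<^sup>2) * s / Dd) / ((s * w / V) * (s * w / V))"
    unfolding H num den using hq unfolding w_def by simp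
  also have "\<dots> = V * (Dd - 2 * (s - V * w)) / (s * w * Dd)"
    using V w s Dd by (simp add: field_simps power2_eq_square)
  also have "Dd - 2 * (s - V * w) = 2 * V * w\<^sup>2 - s"
    unfolding Dd_def w_def by (simp add: algebra_simps power2_eq_square)
  finally show ?thesis unfolding w_def Dd_def .
qed

theorem lemma6p8:
  fixes \<alpha> \<beta> u0 :: real
  assumes "\<alpha> \<ge> 0" and "\<beta> > 0"
  shows "((\<lambda>u. G_s (\<alpha> + \<beta>) (inv (f_ab \<alpha> \<beta>) u)) has_real_derivative
           (let s = \<alpha> + \<beta>; v = v_s (\<alpha> + \<beta>) u0 in
              v * (- s + 2 * v * (1 + v)\<^sup>2) /
              ((1 + v) * (s\<^sup>2 + 4 * \<alpha> * v\<^sup>2 * (1 + v)) - (\<alpha> - \<beta>) * s * v)))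
         (at (f_ab \<alpha> \<beta> u0))"
proof -
  define s where "s = \<alpha> + \<beta>"
  have s: "s > 0" using assms unfolding s_def by simp
  define V where "V u = KK s (u\<^sup>2)" for u
  have Vp: "V u > 0" "u\<^sup>2 = s * (1 + V u) / V u - (1 + V u)\<^sup>2" for u
    using KK_prop[OF s, of "u\<^sup>2"] unfolding V_def hh_def by auto
  define Vd where "Vd u = inverse (- s / (V u)\<^sup>2 - 2 * (1 + V u)) * (2 * u)" for u
  have dV: "(V has_real_derivative Vd u) (at u)" for u
  proof -
    have "((\<lambda>u. KK s (u\<^sup>2)) has_real_derivative inverse (- s / (KK s (u\<^sup>2))\<^sup>2 - 2 * (1 + KK s (u\<^sup>2))) * (2 * u)) (at u)"
    proof -
      have sq: "((\<lambda>u. u\<^sup>2) has_real_derivative 2 * u) (at u)" by (auto intro!: derivative_eq_intros)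
      show ?thesis using DERIV_chain2[OF KK_deriv[OF s, of "u\<^sup>2"] sq] .
    qed
    then show ?thesis unfolding V_def[abs_def] Vd_def .
  qed
  define Gf where "Gf u = u / (u\<^sup>2 + (1 + V u)\<^sup>2)" for u
  define Gd where "Gd u = V u * (2 * V u * (1 + V u)\<^sup>2 - s) / (s * (1 + V u) * (s + 2 * (V u)\<^sup>2 * (1 + V u)))" for u
  have den_pos: "u\<^sup>2 + (1 + V u)\<^sup>2 > 0" for u using Vp(1)[of u] by (simp add: add_nonneg_pos)
  have dG: "(Gf has_real_derivative Gd u) (at u)" for u
  proof -
    have d1: "((\<lambda>u. u\<^sup>2 + (1 + V u)\<^sup>2) has_real_derivative 2 * u + 2 * (1 + V u) * Vd u) (at u)"
      by (auto intro!: derivative_eq_intros dV simp: power2_eq_square)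
    have dn: "u\<^sup>2 + (1 + V u)\<^sup>2 \<noteq> 0" using den_pos[of u] by linarith
    have "(Gf has_real_derivative (1 * (u\<^sup>2 + (1 + V u)\<^sup>2) - u * (2 * u + 2 * (1 + V u) * Vd u))
          / ((u\<^sup>2 + (1 + V u)\<^sup>2) * (u\<^sup>2 + (1 + V u)\<^sup>2))) (at u)"
      unfolding Gf_def[abs_def] by (rule DERIV_divide[OF DERIV_ident d1 dn])
    also have "(1 * (u\<^sup>2 + (1 + V u)\<^sup>2) - u * (2 * u + 2 * (1 + V u) * Vd u))
          / ((u\<^sup>2 + (1 + V u)\<^sup>2) * (u\<^sup>2 + (1 + V u)\<^sup>2)) = Gd u"
      unfolding Gd_def Vd_def by (rule alg_G[OF Vp(1) s Vp(2)])
    finally show ?thesis .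
  qed
  define T where "T u = (1 + V u) * (s\<^sup>2 + 4 * \<alpha> * (V u)\<^sup>2 * (1 + V u)) - (\<alpha> - \<beta>) * s * V u" for u
  have Tpos: "T u > 0" for u
  proof -
    have "(\<alpha> - \<beta>) * s * V u \<le> s * s * V u"
      using assms s Vp(1)[of u] unfolding s_def by (intro mult_right_mono) auto
    moreover have "0 \<le> 4 * \<alpha> * (V u)\<^sup>2 * (1 + V u)\<^sup>2" using assms Vp(1)[of u] by simp
    moreover have "T u = s\<^sup>2 + (s * s * V u - (\<alpha> - \<beta>) * s * V u) + 4 * \<alpha> * (V u)\<^sup>2 * (1 + V u)\<^sup>2"
      unfolding T_def by (simp add: algebra_simps power2_eq_square)
    ultimately have "T u \<ge> s\<^sup>2" by linarith
    then show ?thesis using s by (smt (verit) zero_less_power)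
  qed
  have Fd_eq: "1 + (\<alpha> - \<beta>) * Gd u = T u / (s * (1 + V u) * (s + 2 * (V u)\<^sup>2 * (1 + V u)))" for u
  proof -
    have p: "s * (1 + V u) * (s + 2 * (V u)\<^sup>2 * (1 + V u)) > 0"
      using s Vp(1)[of u] by (simp add: add_pos_nonneg)
    show ?thesis unfolding Gd_def T_def using p s_def
      by (simp add: field_simps) (simp add: algebra_simps power2_eq_square)
  qed
  define Fd where "Fd u = 1 + (\<alpha> - \<beta>) * Gd u" for u
  have Fd_pos: "Fd u > 0" for u
  proof -
    have "s * (1 + V u) * (s + 2 * (V u)\<^sup>2 * (1 + V u)) > 0"
      using s Vp(1)[of u] by (simp add: add_pos_nonneg)
    then show ?thesis unfolding Fd_def Fd_eq using Tpos[of u] by simp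
  qed
  define F where "F u = u + (\<alpha> - \<beta>) * Gf u" for u
  have dF: "(F has_real_derivative Fd u) (at u)" for u
    unfolding F_def[abs_def] Fd_def by (auto intro!: derivative_eq_intros dG)
  have Gs: "G_s (\<alpha> + \<beta>) = Gf"
    by (rule ext) (simp add: Gs_eq[OF s[unfolded s_def]] Gf_def V_def s_def)
  have fab: "f_ab \<alpha> \<beta> = F"
    by (rule ext) (simp add: f_ab_def Gs F_def)
  have mono: "F a < F b" if "a < b" for a b
    using that by (rule DERIV_pos_imp_increasing) (use dF Fd_pos in blast)
  have injF: "inj F"
    by (rule strict_mono_imp_inj_on) (auto simp: strict_mono_def mono)
  have invF: "inv F (F z) = z" for z using injF by simp
  have contF: "isCont F z" for z using dF DERIV_isCont by blast
  have dinv: "(inv F has_real_derivative inverse (Fd u0)) (at (F u0))"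
  proof (rule DERIV_inverse_function[where a = "F (u0 - 1)" and b = "F (u0 + 1)"])
    show "(F has_real_derivative Fd u0) (at (inv F (F u0)))" using dF invF by simp
    show "Fd u0 \<noteq> 0" using Fd_pos[of u0] by simp
    show "F (u0 - 1) < F u0" "F u0 < F (u0 + 1)" by (auto intro: mono)
    show "F (inv F y) = y" if "F (u0 - 1) < y" "y < F (u0 + 1)" for y
    proof -
      have "\<exists>x\<ge>u0 - 1. x \<le> u0 + 1 \<and> F x = y"
        by (rule IVT) (use that contF in auto)
      then obtain z where "u0 - 1 \<le> z" "z \<le> u0 + 1" "F z = y" by blast
      then show ?thesis using invF by metis
    qed
    show "isCont (inv F) (F u0)"
      by (rule isCont_inverse_function2[where a = "u0 - 1" and b = "u0 + 1" and f = F and g = "inv F" and x = u0])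
         (auto simp: invF contF)
  qed
  have "((\<lambda>y. Gf (inv F y)) has_real_derivative Gd u0 * inverse (Fd u0)) (at (F u0))"
    using DERIV_chain2[OF _ dinv, of Gf "Gd u0"] dG[of u0] invF[of u0] by simp
  moreover have "Gd u0 * inverse (Fd u0) = (let s = \<alpha> + \<beta>; v = v_s (\<alpha> + \<beta>) u0 in
              v * (- s + 2 * v * (1 + v)\<^sup>2) /
              ((1 + v) * (s\<^sup>2 + 4 * \<alpha> * v\<^sup>2 * (1 + v)) - (\<alpha> - \<beta>) * s * v))"
  proof -
    have vs: "v_s (\<alpha> + \<beta>) u0 = V u0" unfolding V_def s_def using vs_eq s s_def by simp
    have p: "s * (1 + V u0) * (s + 2 * (V u0)\<^sup>2 * (1 + V u0)) > 0"
      using s Vp(1)[of u0] by (simp add: add_pos_nonneg)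
    have "Gd u0 * inverse (Fd u0) = V u0 * (- s + 2 * V u0 * (1 + V u0)\<^sup>2) / T u0"
    proof -
      define Den where "Den = s * (1 + V u0) * (s + 2 * (V u0)\<^sup>2 * (1 + V u0))"
      have e1: "Fd u0 = T u0 / Den" unfolding Fd_def Fd_eq Den_def ..
      have e2: "Gd u0 = V u0 * (2 * V u0 * (1 + V u0)\<^sup>2 - s) / Den" unfolding Gd_def Den_def ..
      have "Den \<noteq> 0" "T u0 \<noteq> 0" using p Tpos[of u0] unfolding Den_def by auto
      then show ?thesis unfolding e1 e2 by (simp add: field_simps)
    qed
    then show ?thesis unfolding Let_def vs T_def s_def by simp
  qed
  ultimately show ?thesis unfolding Gs fab by simp
qed

end
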